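(* Let $A_S$ be a single-layer GCNN model with graph convolution filter $g(\mathbf{L})$, trained on a training set $S$ of $m$ samples using the SGD algorithm (as described in the context) for $T$ iterations, where the loss function $\ell$ and the activation function $\sigma$ are Lipschitz-continuous and smooth (in the sense of the context) and the loss takes values in $[0,M]$. Then for every $\delta\in(0,1)$, with probability at least $1-\delta$ over the random draw of $S$, $$\mathbf{E}_{\textsc{sgd}}\big[R(A_S)-R_{emp}(A_S)\big]\le \frac{1}{m}\,\mathcal{O}\big((\lambda_G^{\max})^{2T}\big)+\Big(\mathcal{O}\big((\lambda_G^{\max})^{2T}\big)+M\Big)\sqrt{\frac{\log\frac{1}{\delta}}{2m}},$$ where $\mathbf{E}_{\textsc{sgd}}$ is the expectation over the randomness of SGD.
   Context: Setting. $G$ is a graph on $N$ nodes with graph Laplacian $\mathbf{L}=\mathbf{D}-\mathbf{A}$ ($\mathbf{A}$ adjacency, $\mathbf{D}$ degree matrix). A graph filter is a matrix $g(\mathbf{L})\in\mathbb{R}^{N\times N}$ (a function of $\mathbf{L}$ or of a degree-normalized version of it); $\lambda_G^{\max}$ denotes the largest singular value of $g(\mathbf{L})$ (equal to its largest absolute eigenvalue when $g(\mathbf{L})$ is symmetric/normal). For a node $\mathbf{x}$ write $e_{\cdot j}=[g(\mathbf{L})]_{\mathbf{x}j}$ and $\mathcal{N}(\mathbf{x})=\{j: [g(\mathbf{L})]_{\mathbf{x}j}\neq 0\}$ (including $\mathbf{x}$); the ego-graph of $\mathbf{x}$ is the subgraph on $\mathcal{N}(\mathbf{x})$. Each node $j$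 carries a scalar feature $\mathbf{x}_j\in\mathbb{R}$, and the features are normalized so that, for every node $\mathbf{x}$, the vector of features on its ego-graph has Euclidean norm $1$. A single-layer GCNN with parameter $\bm{\theta}\in\mathbb{R}$ outputs at node $\mathbf{x}$: $f(\mathbf{x},\bm{\theta})=\sigma\big(\sum_{j\in\mathcal{N}(\mathbf{x})}e_{\cdot j}\mathbf{x}_j\bm{\theta}\big)$. Data. A sample is $\mathbf{z}=(\mathbf{x},y)$ (a node, i.e. its ego-graph, with a real label $y$), drawn i.i.d. from an unknown distribution $\mathcal{D}$; $S=\{\mathbf{z}_1,\dots,\mathbf{z}_m\}$ with $m\le N$. $A_S$ denotes the model $f(\cdot,\bm{\theta}_S)$ with $\bm{\theta}_S$ the parameter output by training on $S$. Risk $R(A_S)=\mathbf{E}_{\mathbf{z}\sim\mathcal{D}}[\ell(A_S,\mathbf{z})]$, empirical risk $R_{emp}(A_S)=\frac1m\sum_{j=1}^m\ell(A_S,\mathbf{z}_j)$, where $\ell(A_S,\mathbf{z})=\ell(f(\mathbf{x},\bm{\theta}_S),y)$. SGD. Starting from an initial $\bm{\theta}_{S,0}$, at step $t$ an index $i_t$ is chosen uniformly at random from $\{1,\dots,m\}$ and $\bm{\theta}_{S,t+1}=\bm{\theta}_{S,t}-\eta\nabla_{\bm{\theta}}\ell(f(\mathbf{x}_{i_t},\bm{\theta}_{S,t}),y_{i_t})$ with learning rate $\eta>0$; $\bm{\theta}_S=\bm{\theta}_{S,T}$. Regularity. Activation: $|\sigma'(u)|\le\alpha_\sigma$ and $|\sigma'(u)-\sigma'(v)|\le\nu_\sigma|u-v|$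 for all $u,v$. Loss: $|\ell(f,y)-\ell(f',y)|\le\alpha_\ell|f-f'|$ and $|\nabla_{\bm\theta}\ell(f(\cdot),y)-\nabla_{\bm\theta}\ell(f'(\cdot),y)|\le\nu_\ell|\nabla_{\bm\theta}f(\cdot)-\nabla_{\bm\theta}f'(\cdot)|$. The $\mathcal{O}(\cdot)$ terms hide factors depending only on $\eta,\alpha_\ell,\alpha_\sigma,\nu_\ell,\nu_\sigma,T$ (not on $m$). *)

theory Defs
  imports "HOL-Probability.Probability"
begin

text \<open>Nodes of the graph are 0,...,N-1. A graph filter g(L) is an N x N real matrix,
  represented as g :: nat => nat => real (entries outside {..<N} are irrelevant).
  Vectors of R^N are functions nat => real vanishing outside {..<N}.\<close>

type_synonym filter = "nat \<Rightarrow> nat \<Rightarrow> real"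

definition largest_singular_value :: "nat \<Rightarrow> filter \<Rightarrow> real" where
  "largest_singular_value N A =
     sqrt (Max {\<mu>. \<exists>v::nat \<Rightarrow> real. (\<forall>i\<ge>N. v i = 0) \<and> (\<exists>i<N. v i \<noteq> 0) \<and>
                 (\<forall>i<N. (\<Sum>k<N. (\<Sum>j<N. A j i * A j k) * v k) = \<mu> * v i)})"

definition ego_nodes :: "nat \<Rightarrow> filter \<Rightarrow> nat \<Rightarrow> nat set" where
  "ego_nodes N g x = {j. j < N \<and> g x j \<noteq> 0} \<union> {x}"

definition graph_conv :: "nat \<Rightarrow> filter \<Rightarrow> (nat \<Rightarrow> real) \<Rightarrow> nat \<Rightarrow> real" where
  "graph_conv N g feat x = (\<Sum>j\<in>ego_nodes N g x. g x j * feat j)"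

definition gcnn :: "nat \<Rightarrow> (real \<Rightarrow> real) \<Rightarrow> filter \<Rightarrow> (nat \<Rightarrow> real) \<Rightarrow> nat \<Rightarrow> real \<Rightarrow> real" where
  "gcnn N \<sigma> g feat x \<theta> = \<sigma> (graph_conv N g feat x * \<theta>)"

definition loss_grad ::
  "nat \<Rightarrow> (real \<Rightarrow> real \<Rightarrow> real) \<Rightarrow> (real \<Rightarrow> real) \<Rightarrow> filter \<Rightarrow> (nat \<Rightarrow> real)
     \<Rightarrow> nat \<times> real \<Rightarrow> real \<Rightarrow> real" where
  "loss_grad N l \<sigma> g feat z \<theta> = deriv (\<lambda>t. l (gcnn N \<sigma> g feat (fst z) t) (snd z)) \<theta>"

definition sgd_param ::
  "nat \<Rightarrow> (real \<Rightarrow> real \<Rightarrow> real) \<Rightarrow> (real \<Rightarrow> real) \<Rightarrow> filter \<Rightarrow> (nat \<Rightarrow> real)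
     \<Rightarrow> real \<Rightarrow> real \<Rightarrow> (nat \<Rightarrow> nat \<times> real) \<Rightarrow> nat list \<Rightarrow> real" where
  "sgd_param N l \<sigma> g feat \<eta> \<theta>0 S is =
     foldl (\<lambda>\<theta> i. \<theta> - \<eta> * loss_grad N l \<sigma> g feat (S i) \<theta>) \<theta>0 is"

definition risk ::
  "nat \<Rightarrow> (real \<Rightarrow> real \<Rightarrow> real) \<Rightarrow> (real \<Rightarrow> real) \<Rightarrow> filter \<Rightarrow> (nat \<Rightarrow> real)
     \<Rightarrow> (nat \<times> real) measure \<Rightarrow> real \<Rightarrow> real" where
  "risk N l \<sigma> g feat D \<theta> = (\<integral>z. l (gcnn N \<sigma> g feat (fst z) \<theta>) (snd z) \<partial>D)"

definition emp_risk ::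
  "nat \<Rightarrow> (real \<Rightarrow> real \<Rightarrow> real) \<Rightarrow> (real \<Rightarrow> real) \<Rightarrow> filter \<Rightarrow> (nat \<Rightarrow> real)
     \<Rightarrow> nat \<Rightarrow> (nat \<Rightarrow> nat \<times> real) \<Rightarrow> real \<Rightarrow> real" where
  "emp_risk N l \<sigma> g feat m S \<theta> =
     (\<Sum>i<m. l (gcnn N \<sigma> g feat (fst (S i)) \<theta>) (snd (S i))) / real m"

text \<open>Expectation over the SGD randomness: i_0,...,i_{T-1} i.i.d. uniform on {0..<m}.\<close>
definition sgd_expect :: "nat \<Rightarrow> nat \<Rightarrow> (nat list \<Rightarrow> real) \<Rightarrow> real" where
  "sgd_expect m T X = (\<Sum>is\<in>{is. set is \<subseteq> {..<m} \<and> length is = T}. X is) / real m ^ T"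

end

theory Submission
  imports Defs "Jordan_Normal_Form.Char_Poly"
begin


definition ev_set :: "nat \<Rightarrow> filter \<Rightarrow> real set" where
  "ev_set N A = {\<mu>. \<exists>v::nat \<Rightarrow> real. (\<forall>i\<ge>N. v i = 0) \<and> (\<exists>i<N. v i \<noteq> 0) \<and>
                 (\<forall>i<N. (\<Sum>k<N. (\<Sum>j<N. A j i * A j k) * v k) = \<mu> * v i)}"

lemma lsv_ev: "largest_singular_value N A = sqrt (Max (ev_set N A))"
  unfolding largest_singular_value_def ev_set_def by simp

lemma ev_set_finite: "finite (ev_set N A)"
proof -
  define B :: "real mat" where "B = mat N N (\<lambda>(i,k). \<Sum>j<N. A j i * A j k)"
  have Bc: "B \<in> carrier_mat N N" unfolding B_def by simp
  have sub: "ev_set N A \<subseteq> {k. poly (char_poly B) k = 0}"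
  proof
    fix \<mu> assume "\<mu> \<in> ev_set N A"
    then obtain v where v0: "\<forall>i\<ge>N. v i = 0" and vnz: "\<exists>i<N. v i \<noteq> 0"
      and ve: "\<forall>i<N. (\<Sum>k<N. (\<Sum>j<N. A j i * A j k) * v k) = \<mu> * v i"
      unfolding ev_set_def by blast
    define vv where "vv = vec N v"
    have "eigenvector B vv \<mu>"
      unfolding eigenvector_def
    proof (intro conjI)
      show "vv \<in> carrier_vec (dim_row B)" using Bc unfolding vv_def by simp
      show "vv \<noteq> 0\<^sub>v (dim_row B)"
      proof
        assume "vv = 0\<^sub>v (dim_row B)"
        then have "\<forall>i<N. v i = 0" unfolding vv_def using Bc
          by (metis carrier_matD(1) index_vec index_zero_vec(1))
        with vnz show False by blast
      qed
      show "B *\<^sub>v vv = \<mu> \<cdot>\<^sub>v vv"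
      proof (rule eq_vecI)
        fix i assume "i < dim_vec (\<mu> \<cdot>\<^sub>v vv)"
        then have i: "i < N" unfolding vv_def by simp
        have "(B *\<^sub>v vv) $ i = (\<Sum>k\<in>{0..<N}. (\<Sum>j<N. A j i * A j k) * v k)"
          using i unfolding B_def vv_def by (simp add: mult_mat_vec_def scalar_prod_def row_def)
        also have "\<dots> = \<mu> * v i" using ve i by (simp add: atLeast0LessThan)
        finally show "(B *\<^sub>v vv) $ i = (\<mu> \<cdot>\<^sub>v vv) $ i" using i unfolding vv_def by simp
      qed (simp add: vv_def B_def)
    qed
    then have "eigenvalue B \<mu>" unfolding eigenvalue_def by blast
    then show "\<mu> \<in> {k. poly (char_poly B) k = 0}" using eigenvalue_root_char_poly[OF Bc] by simp
  qed
  have "char_poly B \<noteq> 0" using degree_monic_char_poly[OF Bc] by auto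
  then have "finite {k. poly (char_poly B) k = 0}" by (rule poly_roots_finite)
  then show ?thesis using sub finite_subset by blast
qed


lemma cont_coord [continuous_intros]: "continuous_on S (\<lambda>v::nat \<Rightarrow> real. v i)"
  by (rule continuous_on_subset[OF continuous_on_product_coordinates]) simp

definition Qf :: "nat \<Rightarrow> filter \<Rightarrow> (nat \<Rightarrow> real) \<Rightarrow> real" where
  "Qf N A v = (\<Sum>j<N. (\<Sum>i<N. A j i * v i)\<^sup>2)"

lemma Qf_nonneg: "Qf N A v \<ge> 0" unfolding Qf_def by (intro sum_nonneg) auto

lemma sphere_max:
  assumes N: "N \<ge> 1"
  obtains v where "\<forall>i\<ge>N. v i = 0" "(\<Sum>i<N. (v i)\<^sup>2) = 1"
    "\<And>w. (\<forall>i\<ge>N. w i = 0) \<Longrightarrow> Qf N A w \<le> Qf N A v * (\<Sum>i<N. (w i)\<^sup>2)"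
proof -
  define Sb :: "nat \<Rightarrow> real set" where "Sb = (\<lambda>i. if i < N then {-1..1} else {0})"
  define K where "K = PiE UNIV Sb \<inter> {v. (\<Sum>i<N. (v i)\<^sup>2) = 1}"
  have "compactin (product_topology (\<lambda>i. euclidean) UNIV) (PiE UNIV Sb)"
    by (subst compactin_PiE) (auto simp: Sb_def)
  then have c1: "compact (PiE UNIV Sb)" by (simp add: euclidean_product_topology)
  have c2: "closed {v::nat\<Rightarrow>real. (\<Sum>i<N. (v i)\<^sup>2) = 1}"
    by (intro closed_Collect_eq continuous_intros)
  have cK: "compact K" unfolding K_def using c1 c2 by (rule compact_Int_closed)
  define e0 :: "nat \<Rightarrow> real" where "e0 = (\<lambda>i. if i = 0 then 1 else 0)"
  have "(\<Sum>i<N. (e0 i)\<^sup>2) = (\<Sum>i<N. if i = 0 then 1 else 0)" by (rule sum.cong) (auto simp: e0_def)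
  also have "\<dots> = 1" using N by (subst sum.delta) auto
  finally have "(\<Sum>i<N. (e0 i)\<^sup>2) = 1" .
  moreover have "e0 \<in> PiE UNIV Sb" using N unfolding Sb_def e0_def by (auto simp: PiE_iff)
  ultimately have "e0 \<in> K" unfolding K_def by simp
  then have Kne: "K \<noteq> {}" by auto
  have "continuous_on K (Qf N A)" unfolding Qf_def by (intro continuous_intros)
  from continuous_attains_sup[OF cK Kne this]
  obtain v where vK: "v \<in> K" and vmax: "\<And>u. u \<in> K \<Longrightarrow> Qf N A u \<le> Qf N A v" by blast
  have v0: "\<forall>i\<ge>N. v i = 0"
  proof (intro allI impI)
    fix i assume "N \<le> i"
    moreover have "v i \<in> Sb i" using vK unfolding K_def by (auto simp: PiE_iff)
    ultimately show "v i = 0" unfolding Sb_def by simp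
  qed
  have v1: "(\<Sum>i<N. (v i)\<^sup>2) = 1" using vK unfolding K_def by auto
  show ?thesis
  proof (rule that[OF v0 v1])
    fix w :: "nat \<Rightarrow> real" assume w0: "\<forall>i\<ge>N. w i = 0"
    define s where "s = (\<Sum>i<N. (w i)\<^sup>2)"
    have s0: "s \<ge> 0" unfolding s_def by (intro sum_nonneg) auto
    show "Qf N A w \<le> Qf N A v * s"
    proof (cases "s = 0")
      case True
      then have "\<forall>i<N. w i = 0" unfolding s_def by (subst (asm) sum_nonneg_eq_0_iff) auto
      then have "Qf N A w = 0" unfolding Qf_def by simp
      then show ?thesis using True by simp
    next
      case False
      then have sp: "s > 0" using s0 by simp
      define u where "u = (\<lambda>i. w i / sqrt s)"
      have usq: "(u i)\<^sup>2 = (w i)\<^sup>2 / s" for i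
        unfolding u_def using sp by (simp add: power_divide)
      have "u \<in> K"
        unfolding K_def
      proof
        show "u \<in> PiE UNIV Sb"
        proof (auto simp: PiE_iff Sb_def)
          fix i assume i: "i < N"
          have "(w i)\<^sup>2 \<le> s" unfolding s_def using i by (intro member_le_sum) auto
          then have "(u i)\<^sup>2 \<le> 1" using usq sp by (simp add: divide_le_eq_1)
          then have "\<bar>u i\<bar> \<le> 1" by (simp add: abs_square_le_1)
          then show "- 1 \<le> u i" "u i \<le> 1" by auto
        next
          fix i assume "\<not> i < N"
          then show "u i = 0" using w0 unfolding u_def by simp
        qed
        show "u \<in> {v. (\<Sum>i<N. (v i)\<^sup>2) = 1}"
          using sp by (simp add: usq sum_divide_distrib[symmetric] s_def[symmetric])
      qed
      then have le: "Qf N A u \<le> Qf N A v" by (rule vmax)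
      have "Qf N A u = Qf N A w / s"
      proof -
        have "(\<Sum>i<N. A j i * u i) = (\<Sum>i<N. A j i * w i) / sqrt s" for j
          unfolding u_def by (simp add: sum_divide_distrib)
        then have sq: "(\<Sum>i<N. A j i * u i)\<^sup>2 = (\<Sum>i<N. A j i * w i)\<^sup>2 / s" for j
          using sp by (simp add: power_divide)
        have "Qf N A u = (\<Sum>j<N. (\<Sum>i<N. A j i * w i)\<^sup>2 / s)" unfolding Qf_def using sq by simp
        also have "\<dots> = Qf N A w / s" unfolding Qf_def by (rule sum_divide_distrib[symmetric])
        finally show ?thesis .
      qed
      then show ?thesis using le sp by (simp add: divide_le_eq mult.commute)
    qed
  qed
qed


lemma quad_zero:
  fixes b p :: real
  assumes "\<And>t. 0 \<le> 2*t*b + t\<^sup>2*p"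
  shows "b = 0"
proof (rule ccontr)
  assume bnz: "b \<noteq> 0"
  define q where "q = \<bar>p\<bar> + 1"
  have q: "q \<ge> 1" "\<bar>p\<bar> \<le> q" unfolding q_def by auto
  define t where "t = - b / q"
  have "t\<^sup>2 * p \<le> t\<^sup>2 * q" using q by (intro mult_left_mono) auto
  also have "t\<^sup>2 * q = b\<^sup>2 / q" unfolding t_def using q by (simp add: power2_eq_square field_simps)
  finally have tp: "t\<^sup>2*p \<le> b\<^sup>2 / q" .
  have "2*t*b = - 2 * b\<^sup>2 / q" unfolding t_def by (simp add: power2_eq_square)
  then have "2*t*b + t\<^sup>2*p \<le> - 2 * b\<^sup>2 / q + b\<^sup>2 / q" using tp by linarith
  also have "\<dots> = - b\<^sup>2 / q" by simp
  also have "\<dots> < 0" using bnz q by simp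
  finally show False using assms[of t] by simp
qed

lemma row_bound:
  assumes N: "N \<ge> 1" and x: "x < N"
  shows "(\<Sum>j<N. (A x j)\<^sup>2) \<le> Max (ev_set N A)"
proof -
  obtain v where v0: "\<forall>i\<ge>N. v i = 0" and v1: "(\<Sum>i<N. (v i)\<^sup>2) = 1"
    and vmax: "\<And>w. (\<forall>i\<ge>N. w i = 0) \<Longrightarrow> Qf N A w \<le> Qf N A v * (\<Sum>i<N. (w i)\<^sup>2)"
    using sphere_max[OF N] by metis
  define \<mu> where "\<mu> = Qf N A v"
  define a where "a = (\<lambda>j. \<Sum>i<N. A j i * v i)"
  have PSD: "\<mu> * (\<Sum>i<N. v i * z i) - (\<Sum>j<N. a j * (\<Sum>i<N. A j i * z i)) = 0"
    if z0: "\<forall>i\<ge>N. z i = 0" for z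
  proof (rule quad_zero)
    fix t :: real
    define c where "c = (\<lambda>j. \<Sum>i<N. A j i * z i)"
    define w where "w = (\<lambda>i. v i + t * z i)"
    have w0: "\<forall>i\<ge>N. w i = 0" using v0 z0 unfolding w_def by simp
    have wc: "(\<Sum>i<N. A j i * w i) = a j + t * c j" for j
      unfolding w_def a_def c_def by (simp add: distrib_left sum.distrib sum_distrib_left mult.left_commute)
    have "Qf N A w = (\<Sum>j<N. (a j)\<^sup>2 + 2 * t * (a j * c j) + t\<^sup>2 * (c j)\<^sup>2)"
      unfolding Qf_def wc by (rule sum.cong) (auto simp: power2_eq_square algebra_simps)
    also have "\<dots> = \<mu> + 2 * t * (\<Sum>j<N. a j * c j) + t\<^sup>2 * (\<Sum>j<N. (c j)\<^sup>2)"
      unfolding \<mu>_def Qf_def a_def by (simp add: sum.distrib sum_distrib_left)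
    finally have Qw: "Qf N A w = \<mu> + 2 * t * (\<Sum>j<N. a j * c j) + t\<^sup>2 * (\<Sum>j<N. (c j)\<^sup>2)" .
    have "(\<Sum>i<N. (w i)\<^sup>2) = (\<Sum>i<N. (v i)\<^sup>2 + 2 * t * (v i * z i) + t\<^sup>2 * (z i)\<^sup>2)"
      unfolding w_def by (rule sum.cong) (auto simp: power2_eq_square algebra_simps)
    also have "\<dots> = 1 + 2 * t * (\<Sum>i<N. v i * z i) + t\<^sup>2 * (\<Sum>i<N. (z i)\<^sup>2)"
      using v1 by (simp add: sum.distrib sum_distrib_left)
    finally have Nw: "(\<Sum>i<N. (w i)\<^sup>2) = 1 + 2 * t * (\<Sum>i<N. v i * z i) + t\<^sup>2 * (\<Sum>i<N. (z i)\<^sup>2)" .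
    have "Qf N A w \<le> \<mu> * (\<Sum>i<N. (w i)\<^sup>2)" using vmax[OF w0] unfolding \<mu>_def .
    then have "0 \<le> \<mu> * (1 + 2 * t * (\<Sum>i<N. v i * z i) + t\<^sup>2 * (\<Sum>i<N. (z i)\<^sup>2))
       - (\<mu> + 2 * t * (\<Sum>j<N. a j * c j) + t\<^sup>2 * (\<Sum>j<N. (c j)\<^sup>2))" using Qw Nw by simp
    then show "0 \<le> 2 * t * (\<mu> * (\<Sum>i<N. v i * z i) - (\<Sum>j<N. a j * (\<Sum>i<N. A j i * z i)))
        + t\<^sup>2 * (\<mu> * (\<Sum>i<N. (z i)\<^sup>2) - (\<Sum>j<N. (c j)\<^sup>2))"
      unfolding c_def by (simp add: algebra_simps)
  qed
  have eig: "(\<Sum>k<N. (\<Sum>j<N. A j i * A j k) * v k) = \<mu> * v i" if i: "i < N" for i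
  proof -
    define z :: "nat \<Rightarrow> real" where "z = (\<lambda>k. if k = i then 1 else 0)"
    have z0: "\<forall>k\<ge>N. z k = 0" using i unfolding z_def by auto
    have s1: "(\<Sum>k<N. v k * z k) = v i" using i unfolding z_def by (simp add: if_distrib sum.delta cong: if_cong)
    have s2: "(\<Sum>k<N. A j k * z k) = A j i" for j using i unfolding z_def by (simp add: if_distrib sum.delta cong: if_cong)
    have "(\<Sum>j<N. a j * A j i) = (\<Sum>j<N. \<Sum>k<N. A j i * A j k * v k)"
      unfolding a_def by (simp add: sum_distrib_left sum_distrib_right mult_ac)
    also have "\<dots> = (\<Sum>k<N. \<Sum>j<N. A j i * A j k * v k)" by (rule sum.swap)
    also have "\<dots> = (\<Sum>k<N. (\<Sum>j<N. A j i * A j k) * v k)" by (simp add: sum_distrib_right)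
    finally show ?thesis using PSD[OF z0] unfolding s1 s2 by simp
  qed
  have vnz: "\<exists>i<N. v i \<noteq> 0"
  proof (rule ccontr)
    assume "\<not> ?thesis"
    then have "(\<Sum>i<N. (v i)\<^sup>2) = 0" by simp
    with v1 show False by simp
  qed
  have mem: "\<mu> \<in> ev_set N A" unfolding ev_set_def using v0 vnz eig by blast
  define r where "r = (\<Sum>j<N. (A x j)\<^sup>2)"
  define w where "w = (\<lambda>j. if j < N then A x j else 0)"
  have w0: "\<forall>i\<ge>N. w i = 0" unfolding w_def by simp
  have nw: "(\<Sum>i<N. (w i)\<^sup>2) = r" unfolding w_def r_def by simp
  have "r\<^sup>2 = (\<Sum>i<N. A x i * w i)\<^sup>2" unfolding r_def w_def by (simp add: power2_eq_square)
  also have "\<dots> \<le> Qf N A w" unfolding Qf_def using x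
    by (intro member_le_sum[where f = "\<lambda>j. (\<Sum>i<N. A j i * w i)\<^sup>2"]) auto
  also have "\<dots> \<le> \<mu> * r" using vmax[OF w0] nw unfolding \<mu>_def by simp
  finally have rr: "r\<^sup>2 \<le> \<mu> * r" .
  have r0: "r \<ge> 0" unfolding r_def by (intro sum_nonneg) auto
  have "r \<le> \<mu>"
  proof (cases "r = 0")
    case True then show ?thesis using Qf_nonneg unfolding \<mu>_def by simp
  next
    case False
    then have "r > 0" using r0 by simp
    then show ?thesis using rr by (simp add: power2_eq_square)
  qed
  also have "\<mu> \<le> Max (ev_set N A)" using mem ev_set_finite by (rule Max_ge[rotated])
  finally show ?thesis unfolding r_def .
qed


lemma deriv_le_lip:
  fixes f :: "real \<Rightarrow> real"
  assumes d: "f differentiable (at x)" and L: "\<And>a b. \<bar>f a - f b\<bar> \<le> K * \<bar>a - b\<bar>"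
  shows "\<bar>deriv f x\<bar> \<le> K"
proof -
  have "DERIV f x :> deriv f x" using d by (simp add: DERIV_deriv_iff_real_differentiable)
  then have "((\<lambda>h. (f (x + h) - f x) / h) \<longlongrightarrow> deriv f x) (at 0)" by (simp add: DERIV_def)
  then have t: "((\<lambda>h. \<bar>(f (x + h) - f x) / h\<bar>) \<longlongrightarrow> \<bar>deriv f x\<bar>) (at 0)" by (rule tendsto_rabs)
  have pt: "K \<ge> \<bar>(f (x + h) - f x) / h\<bar>" if "h \<noteq> 0" for h
  proof -
    have "\<bar>f (x + h) - f x\<bar> \<le> K * \<bar>h\<bar>" using L[of "x + h" x] by simp
    then show ?thesis using that by (simp add: abs_divide divide_le_eq)
  qed
  have ev: "eventually (\<lambda>h. K \<ge> \<bar>(f (x + h) - f x) / h\<bar>) (at (0::real))"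
    unfolding eventually_at_filter by (rule always_eventually) (use pt in auto)
  show ?thesis by (rule tendsto_upperbound[OF t ev]) simp
qed

lemma deriv_seq:
  fixes f :: "real \<Rightarrow> real"
  assumes d: "f differentiable (at x)"
  shows "(\<lambda>k. (f (x + 1 / real (Suc k)) - f x) * real (Suc k)) \<longlonglongrightarrow> deriv f x"
proof -
  have "DERIV f x :> deriv f x" using d by (simp add: DERIV_deriv_iff_real_differentiable)
  then have t: "((\<lambda>h. (f (x + h) - f x) / h) \<longlongrightarrow> deriv f x) (at 0)" by (simp add: DERIV_def)
  have s: "filterlim (\<lambda>k. 1 / real (Suc k)) (at 0) sequentially"
  proof (rule tendsto_imp_filterlim_at_right[THEN filterlim_mono])
    show "(\<lambda>k. 1 / real (Suc k)) \<longlonglongrightarrow> 0" using LIMSEQ_inverse_real_of_nat by (simp add: inverse_eq_divide)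
    show "\<forall>\<^sub>F k in sequentially. 0 < 1 / real (Suc k)" by simp
  qed (simp_all add: at_within_le_at)
  have "((\<lambda>h. (f (x + h) - f x) / h) \<circ> (\<lambda>k. 1 / real (Suc k))) \<longlonglongrightarrow> deriv f x"
    using filterlim_compose[OF t s] by (simp add: o_def)
  then show ?thesis by (simp add: o_def)
qed

lemma foldl_local:
  assumes "\<forall>i\<in>set xs. S i = S' i"
  shows "foldl (\<lambda>\<theta> i. F \<theta> (S i)) a xs = foldl (\<lambda>\<theta> i. F \<theta> (S' i)) a xs"
  using assms by (induction xs arbitrary: a) auto

locale gs =
  fixes N :: nat and g :: filter and feat :: "nat \<Rightarrow> real" and \<sigma> :: "real \<Rightarrow> real"
    and l :: "real \<Rightarrow> real \<Rightarrow> real" and M \<alpha>l \<alpha>\<sigma> :: real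
  assumes feat_norm: "\<forall>x<N. (\<Sum>j\<in>ego_nodes N g x. (feat j)\<^sup>2) = 1"
  and \<sigma>_diff: "\<forall>u. \<sigma> differentiable (at u)"
  and \<sigma>_d: "\<forall>u. \<bar>deriv \<sigma> u\<bar> \<le> \<alpha>\<sigma>"
  and l_diff: "\<forall>f y. (\<lambda>f'. l f' y) differentiable (at f)"
  and l_lip: "\<forall>f f' y. \<bar>l f y - l f' y\<bar> \<le> \<alpha>l * \<bar>f - f'\<bar>"
  and l_bnd: "\<forall>f y. 0 \<le> l f y \<and> l f y \<le> M"
  and l_meas: "(\<lambda>p. l (fst p) (snd p)) \<in> borel_measurable borel"
  and N1: "1 \<le> N"
begin

definition "Lc = max 1 (largest_singular_value N g)"
definition "K = \<alpha>l * \<alpha>\<sigma> * Lc"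

lemma Lc_ge1: "Lc \<ge> 1" unfolding Lc_def by simp

lemma \<alpha>l_nn: "\<alpha>l \<ge> 0"
proof -
  have "\<bar>l 1 0 - l 0 0\<bar> \<le> \<alpha>l * \<bar>1 - 0\<bar>" using l_lip by blast
  then show ?thesis by simp
qed

lemma \<alpha>\<sigma>_nn: "\<alpha>\<sigma> \<ge> 0"
  using \<sigma>_d[rule_format, of 0] by simp

lemma K_nn: "K \<ge> 0" unfolding K_def using \<alpha>l_nn \<alpha>\<sigma>_nn Lc_ge1 by simp

lemma c_bound:
  assumes x: "x < N"
  shows "\<bar>graph_conv N g feat x\<bar> \<le> Lc"
proof -
  have fin: "finite (ego_nodes N g x)" unfolding ego_nodes_def by simp
  have "(graph_conv N g feat x)\<^sup>2 \<le> (\<Sum>j\<in>ego_nodes N g x. (g x j)\<^sup>2) * (\<Sum>j\<in>ego_nodes N g x. (feat j)\<^sup>2)"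
    unfolding graph_conv_def by (rule Cauchy_Schwarz_ineq_sum)
  also have "\<dots> = (\<Sum>j\<in>ego_nodes N g x. (g x j)\<^sup>2)" using feat_norm x by simp
  also have "\<dots> = (\<Sum>j<N. (g x j)\<^sup>2)"
    by (rule sum.mono_neutral_left) (use x in \<open>auto simp: ego_nodes_def\<close>)
  also have "\<dots> \<le> Max (ev_set N g)" by (rule row_bound[OF N1 x])
  finally have "(graph_conv N g feat x)\<^sup>2 \<le> Max (ev_set N g)" .
  then have "\<bar>graph_conv N g feat x\<bar> \<le> sqrt (Max (ev_set N g))"
    using real_sqrt_le_mono by fastforce
  also have "\<dots> \<le> Lc" unfolding Lc_def lsv_ev by simp
  finally show ?thesis .
qed

lemma \<sigma>_lip: "\<bar>\<sigma> a - \<sigma> b\<bar> \<le> \<alpha>\<sigma> * \<bar>a - b\<bar>"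
proof -
  have D: "DERIV \<sigma> x :> deriv \<sigma> x" for x using \<sigma>_diff by (simp add: DERIV_deriv_iff_real_differentiable)
  have *: "\<bar>\<sigma> b - \<sigma> a\<bar> \<le> \<alpha>\<sigma> * \<bar>b - a\<bar>" if ab: "a < b" for a b
  proof -
    obtain z where "\<sigma> b - \<sigma> a = (b - a) * deriv \<sigma> z" using MVT2[OF ab, of \<sigma> "deriv \<sigma>"] D by blast
    then have "\<bar>\<sigma> b - \<sigma> a\<bar> = \<bar>b - a\<bar> * \<bar>deriv \<sigma> z\<bar>" by (simp add: abs_mult)
    also have "\<dots> \<le> \<bar>b - a\<bar> * \<alpha>\<sigma>" using \<sigma>_d by (intro mult_left_mono) auto
    finally show ?thesis by (simp add: mult.commute)
  qed
  show ?thesis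
  proof (cases a b rule: linorder_cases)
    case less then show ?thesis using *[OF less] by (simp add: abs_minus_commute)
  next
    case greater then show ?thesis using *[OF greater] by simp
  qed simp
qed

lemma loss_lip:
  assumes x: "x < N"
  shows "\<bar>l (gcnn N \<sigma> g feat x \<theta>) y - l (gcnn N \<sigma> g feat x \<theta>') y\<bar> \<le> K * \<bar>\<theta> - \<theta>'\<bar>"
proof -
  let ?c = "graph_conv N g feat x"
  have "\<bar>l (gcnn N \<sigma> g feat x \<theta>) y - l (gcnn N \<sigma> g feat x \<theta>') y\<bar> \<le> \<alpha>l * \<bar>\<sigma> (?c * \<theta>) - \<sigma> (?c * \<theta>')\<bar>"
    unfolding gcnn_def by (rule l_lip[rule_format])
  also have "\<dots> \<le> \<alpha>l * (\<alpha>\<sigma> * \<bar>?c * \<theta> - ?c * \<theta>'\<bar>)"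
    using \<sigma>_lip \<alpha>l_nn by (intro mult_left_mono) auto
  also have "\<dots> = \<alpha>l * \<alpha>\<sigma> * (\<bar>?c\<bar> * \<bar>\<theta> - \<theta>'\<bar>)"
    by (simp add: abs_mult right_diff_distrib[symmetric])
  also have "\<dots> \<le> \<alpha>l * \<alpha>\<sigma> * (Lc * \<bar>\<theta> - \<theta>'\<bar>)"
    using c_bound[OF x] \<alpha>l_nn \<alpha>\<sigma>_nn by (intro mult_left_mono mult_right_mono) auto
  finally show ?thesis unfolding K_def by (simp add: mult_ac)
qed

lemma phi_diff: "(\<lambda>t. l (gcnn N \<sigma> g feat x t) y) differentiable (at \<theta>)"
proof -
  have "((\<lambda>f'. l f' y) \<circ> (\<sigma> \<circ> (\<lambda>t. graph_conv N g feat x * t))) differentiable (at \<theta>)"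
    using l_diff \<sigma>_diff
    by (intro differentiable_chain_at) (auto intro!: derivative_intros)
  then show ?thesis unfolding gcnn_def by (simp add: o_def)
qed

lemma grad_bound:
  assumes x: "fst z < N"
  shows "\<bar>loss_grad N l \<sigma> g feat z \<theta>\<bar> \<le> K"
  unfolding loss_grad_def
  by (rule deriv_le_lip[OF phi_diff loss_lip[OF x]])

lemma drift:
  assumes "\<forall>i\<in>set is. fst (S i) < N" and eta: "\<eta> > 0"
  shows "\<bar>sgd_param N l \<sigma> g feat \<eta> \<theta>0 S is - \<theta>0\<bar> \<le> \<eta> * length is * K"
  using assms(1)
proof (induction "is" rule: rev_induct)
  case Nil then show ?case by (simp add: sgd_param_def)
next
  case (snoc i xs)
  let ?t = "sgd_param N l \<sigma> g feat \<eta> \<theta>0 S xs"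
  have eq: "sgd_param N l \<sigma> g feat \<eta> \<theta>0 S (xs @ [i]) = ?t - \<eta> * loss_grad N l \<sigma> g feat (S i) ?t"
    unfolding sgd_param_def by simp
  have "\<bar>?t - \<theta>0\<bar> \<le> \<eta> * length xs * K" using snoc by simp
  moreover have "\<bar>\<eta> * loss_grad N l \<sigma> g feat (S i) ?t\<bar> \<le> \<eta> * K"
    using grad_bound[of "S i"] snoc.prems eta by (simp add: abs_mult mult_left_mono)
  ultimately show ?case unfolding eq by (simp add: algebra_simps)
qed

lemma sgd_local:
  assumes "\<forall>i\<in>set is. S i = S' i"
  shows "sgd_param N l \<sigma> g feat \<eta> \<theta>0 S is = sgd_param N l \<sigma> g feat \<eta> \<theta>0 S' is"
  unfolding sgd_param_def using foldl_local[OF assms, of "\<lambda>\<theta> z. \<theta> - \<eta> * loss_grad N l \<sigma> g feat z \<theta>"] by simp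

end


locale gsD = gs +
  fixes D :: "(nat \<times> real) measure" and \<eta> \<theta>0 :: real
  assumes D_prob: "prob_space D"
  and D_sets: "sets D = sets (count_space {..<N} \<Otimes>\<^sub>M (borel :: real measure))"
  and eta: "\<eta> > 0"
begin

lemma space_D: "space D = {..<N} \<times> UNIV"
  using sets_eq_imp_space_eq[OF D_sets] by (simp add: space_pair_measure)

lemma fst_D[measurable]: "fst \<in> measurable D (count_space {..<N})"
  by (subst measurable_cong_sets[OF D_sets refl]) (rule measurable_fst)

lemma snd_D[measurable]: "snd \<in> borel_measurable D"
  by (subst measurable_cong_sets[OF D_sets refl]) (rule measurable_snd)

lemma \<sigma>_cont: "continuous_on UNIV \<sigma>"
  using \<sigma>_diff by (simp add: continuous_on_eq_continuous_at differentiable_imp_continuous_within)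

lemma \<sigma>_meas[measurable]: "\<sigma> \<in> borel_measurable borel"
  by (rule borel_measurable_continuous_onI[OF \<sigma>_cont])

lemma l_comp[measurable]:
  assumes [measurable]: "f \<in> borel_measurable Mx" "h \<in> borel_measurable Mx"
  shows "(\<lambda>\<omega>. l (f \<omega>) (h \<omega>)) \<in> borel_measurable Mx"
proof -
  have 1: "(\<lambda>\<omega>. (f \<omega>, h \<omega>)) \<in> measurable Mx (borel \<Otimes>\<^sub>M borel)" by measurable
  have 2: "(\<lambda>p. l (fst p) (snd p)) \<in> borel_measurable (borel \<Otimes>\<^sub>M borel)"
    using l_meas by (simp add: borel_prod)
  show ?thesis using measurable_compose[OF 1 2] by simp
qed

lemma phi_meas:
  assumes X: "X \<in> measurable Mx (count_space {..<N})"
    and [measurable]: "Y \<in> borel_measurable Mx" "\<Theta> \<in> borel_measurable Mx"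
  shows "(\<lambda>\<omega>. l (gcnn N \<sigma> g feat (X \<omega>) (\<Theta> \<omega>)) (Y \<omega>)) \<in> borel_measurable Mx"
proof (rule measurable_compose_countable'[where f = "\<lambda>n \<omega>. l (gcnn N \<sigma> g feat n (\<Theta> \<omega>)) (Y \<omega>)", OF _ X])
  fix n assume "n \<in> {..<N}"
  show "(\<lambda>\<omega>. l (gcnn N \<sigma> g feat n (\<Theta> \<omega>)) (Y \<omega>)) \<in> borel_measurable Mx"
    unfolding gcnn_def by measurable
qed simp

lemma grad_meas:
  assumes X: "X \<in> measurable Mx (count_space {..<N})"
    and [measurable]: "Y \<in> borel_measurable Mx" "\<Theta> \<in> borel_measurable Mx"
  shows "(\<lambda>\<omega>. loss_grad N l \<sigma> g feat (X \<omega>, Y \<omega>) (\<Theta> \<omega>)) \<in> borel_measurable Mx"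
proof (rule measurable_compose_countable'[where f = "\<lambda>n \<omega>. loss_grad N l \<sigma> g feat (n, Y \<omega>) (\<Theta> \<omega>)", OF _ X])
  fix n assume "n \<in> {..<N}"
  show "(\<lambda>\<omega>. loss_grad N l \<sigma> g feat (n, Y \<omega>) (\<Theta> \<omega>)) \<in> borel_measurable Mx"
  proof (rule borel_measurable_LIMSEQ_real)
    fix \<omega>
    show "(\<lambda>k. (l (gcnn N \<sigma> g feat n (\<Theta> \<omega> + 1 / real (Suc k))) (Y \<omega>) - l (gcnn N \<sigma> g feat n (\<Theta> \<omega>)) (Y \<omega>)) * real (Suc k))
       \<longlonglongrightarrow> loss_grad N l \<sigma> g feat (n, Y \<omega>) (\<Theta> \<omega>)"
      unfolding loss_grad_def using deriv_seq[OF phi_diff] by simp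
  next
    fix k
    show "(\<lambda>\<omega>. (l (gcnn N \<sigma> g feat n (\<Theta> \<omega> + 1 / real (Suc k))) (Y \<omega>) - l (gcnn N \<sigma> g feat n (\<Theta> \<omega>)) (Y \<omega>)) * real (Suc k))
       \<in> borel_measurable Mx"
      unfolding gcnn_def by measurable
  qed
qed simp

definition "lossf \<theta> z = l (gcnn N \<sigma> g feat (fst z) \<theta>) (snd z)"
definition "R \<theta> = risk N l \<sigma> g feat D \<theta>"

lemma lossf_meas[measurable]: "lossf \<theta> \<in> borel_measurable D"
  unfolding lossf_def by (rule phi_meas) auto

lemma lossf_bnd: "0 \<le> lossf \<theta> z" "lossf \<theta> z \<le> M"
  unfolding lossf_def using l_bnd by auto

lemma lossf_int: "integrable D (lossf \<theta>)"
proof -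
  interpret prob_space D by (rule D_prob)
  show ?thesis
    by (rule integrable_const_bound[where B = M]) (auto simp: lossf_bnd)
qed

lemma R_eq: "R \<theta> = (\<integral>z. lossf \<theta> z \<partial>D)"
  unfolding R_def risk_def lossf_def ..

lemma R_bnd: "0 \<le> R \<theta>" "R \<theta> \<le> M"
proof -
  interpret prob_space D by (rule D_prob)
  show "0 \<le> R \<theta>" unfolding R_eq by (rule Bochner_Integration.integral_nonneg) (simp add: lossf_bnd)
  have "R \<theta> \<le> (\<integral>z. M \<partial>D)" unfolding R_eq
    by (rule integral_mono) (auto simp: lossf_bnd lossf_int)
  then show "R \<theta> \<le> M" by (simp add: prob_space)
qed

lemma lossf_lip: "z \<in> space D \<Longrightarrow> \<bar>lossf \<theta> z - lossf \<theta>' z\<bar> \<le> K * \<bar>\<theta> - \<theta>'\<bar>"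
  unfolding lossf_def using loss_lip space_D by auto

lemma R_lip: "\<bar>R \<theta> - R \<theta>'\<bar> \<le> K * \<bar>\<theta> - \<theta>'\<bar>"
proof -
  interpret prob_space D by (rule D_prob)
  have "R \<theta> - R \<theta>' = (\<integral>z. lossf \<theta> z - lossf \<theta>' z \<partial>D)"
    unfolding R_eq by (simp add: Bochner_Integration.integral_diff lossf_int)
  then have "\<bar>R \<theta> - R \<theta>'\<bar> \<le> (\<integral>z. \<bar>lossf \<theta> z - lossf \<theta>' z\<bar> \<partial>D)"
    using integral_abs_bound by (metis real_norm_def)
  also have "\<dots> \<le> (\<integral>z. K * \<bar>\<theta> - \<theta>'\<bar> \<partial>D)"
    by (rule integral_mono) (auto simp: lossf_int lossf_lip)
  finally show ?thesis by (simp add: prob_space)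
qed

lemma R_meas[measurable]: "R \<in> borel_measurable borel"
proof (rule borel_measurable_continuous_onI)
  have "K-lipschitz_on UNIV R"
    by (rule lipschitz_onI) (auto simp: dist_real_def R_lip K_nn)
  then show "continuous_on UNIV R" by (rule lipschitz_on_continuous_on)
qed

end


lemma ennreal_pow_mono: "(a::ennreal) \<le> b \<Longrightarrow> a ^ n \<le> b ^ n"
  by (induction n) (auto intro: mult_mono)

context gsD begin

definition "th S is = sgd_param N l \<sigma> g feat \<eta> \<theta>0 S is"

lemma comp_meas[measurable]: "i < m \<Longrightarrow> (\<lambda>S. S i) \<in> measurable (PiM {..<m} (\<lambda>_. D)) D"
  by (rule measurable_component_singleton) simp

lemma fst_comp: "i < m \<Longrightarrow> (\<lambda>S. fst (S i)) \<in> measurable (PiM {..<m} (\<lambda>_. D)) (count_space {..<N})"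
  using measurable_compose[OF comp_meas fst_D] by simp

lemma snd_comp[measurable]: "i < m \<Longrightarrow> (\<lambda>S. snd (S i)) \<in> borel_measurable (PiM {..<m} (\<lambda>_. D))"
  using measurable_compose[OF comp_meas snd_D] by simp

lemma theta_meas[measurable]:
  assumes "set is \<subseteq> {..<m}"
  shows "(\<lambda>S. th S is) \<in> borel_measurable (PiM {..<m} (\<lambda>_. D))"
  using assms
proof (induction "is" rule: rev_induct)
  case Nil then show ?case by (simp add: th_def sgd_param_def)
next
  case (snoc i xs)
  then have i: "i < m" and xs: "set xs \<subseteq> {..<m}" by auto
  have eq: "th S (xs @ [i]) = th S xs - \<eta> * loss_grad N l \<sigma> g feat (fst (S i), snd (S i)) (th S xs)" for S
    unfolding th_def sgd_param_def by simp
  have "(\<lambda>S. loss_grad N l \<sigma> g feat (fst (S i), snd (S i)) (th S xs)) \<in> borel_measurable (PiM {..<m} (\<lambda>_. D))"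
    by (rule grad_meas[OF fst_comp[OF i] snd_comp[OF i] snoc.IH[OF xs]])
  then show ?case unfolding eq using snoc.IH[OF xs] by measurable
qed

lemma lossf_comp_meas[measurable]:
  assumes "k < m" and [measurable]: "\<Theta> \<in> borel_measurable (PiM {..<m} (\<lambda>_. D))"
  shows "(\<lambda>S. lossf (\<Theta> S) (S k)) \<in> borel_measurable (PiM {..<m} (\<lambda>_. D))"
  unfolding lossf_def by (rule phi_meas[OF fst_comp[OF assms(1)] snd_comp[OF assms(1)]]) simp

definition "Yf m is S = (\<Sum>k\<in>set is. (R \<theta>0 - lossf \<theta>0 (S k))) +
   (\<Sum>k\<in>{..<m} - set is. (R (th S is) - lossf (th S is) (S k)))"

lemma Yf_meas[measurable]:
  assumes "set is \<subseteq> {..<m}"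
  shows "Yf m is \<in> borel_measurable (PiM {..<m} (\<lambda>_. D))"
proof -
  have [measurable]: "(\<lambda>S. th S is) \<in> borel_measurable (PiM {..<m} (\<lambda>_. D))" using assms by measurable
  have [measurable]: "k \<in> set is \<Longrightarrow> (\<lambda>S. lossf \<theta>0 (S k)) \<in> borel_measurable (PiM {..<m} (\<lambda>_. D))" for k
    using assms by (intro lossf_comp_meas) auto
  have [measurable]: "k \<in> {..<m} - set is \<Longrightarrow> (\<lambda>S. lossf (th S is) (S k)) \<in> borel_measurable (PiM {..<m} (\<lambda>_. D))" for k
    by (intro lossf_comp_meas) auto
  show ?thesis unfolding Yf_def by measurable
qed

lemma hoeff:
  assumes r: "r > 0"
  shows "(\<integral>\<^sup>+z. ennreal (exp (r * (R \<theta> - lossf \<theta> z))) \<partial>D) \<le> ennreal (exp (r\<^sup>2 * M\<^sup>2 / 8))"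
proof -
  interpret Dp: prob_space D by (rule D_prob)
  interpret H: interval_bounded_random_variable D "\<lambda>z. - lossf \<theta> z" "-M" 0
    by unfold_locales (auto simp: lossf_bnd)
  have E: "Dp.expectation (\<lambda>z. - lossf \<theta> z) = - R \<theta>" by (simp add: R_eq)
  from H.Hoeffdings_lemma_nn_integral[OF r] show ?thesis unfolding E by simp
qed

end


context gsD begin

lemma core:
  assumes Iss: "set is \<subseteq> {..<m}" and r: "r > 0"
  shows "(\<integral>\<^sup>+S. ennreal (exp (r * Yf m is S)) \<partial>PiM {..<m} (\<lambda>_. D)) \<le> ennreal (exp (r\<^sup>2 * M\<^sup>2 / 8)) ^ m"
proof -
  interpret Dp: prob_space D by (rule D_prob)
  interpret PS: product_prob_space "\<lambda>_::nat. D"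
    unfolding product_prob_space_def product_prob_space_axioms_def product_sigma_finite_def
    using D_prob by (auto simp: prob_space_imp_sigma_finite)
  define I where "I = set is"
  define J where "J = {..<m} - I"
  have IJ: "I \<union> J = {..<m}" "I \<inter> J = {}" "finite I" "finite J" using Iss unfolding I_def J_def by auto
  have cardIJ: "card I + card J = m" using IJ card_Un_disjoint[of I J] by simp
  interpret PJ: prob_space "PiM J (\<lambda>_. D)" by (rule prob_space_PiM) (simp add: D_prob)
  define e where "e = ennreal (exp (r\<^sup>2 * M\<^sup>2 / 8))"
  define F where "F S = ennreal (exp (r * Yf m is S))" for S
  have Fm: "F \<in> borel_measurable (PiM (I \<union> J) (\<lambda>_. D))" unfolding F_def IJ(1) using Iss by measurable
  have Pm: "PiM (I \<union> J) (\<lambda>_. D) = distr (PiM I (\<lambda>_. D) \<Otimes>\<^sub>M PiM J (\<lambda>_. D)) (PiM (I \<union> J) (\<lambda>_. D)) (merge I J)"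
    using PS.distr_merge[OF IJ(2) IJ(3) IJ(4)] by simp
  have Fm2: "(\<lambda>p. F (merge I J p)) \<in> borel_measurable (PiM I (\<lambda>_. D) \<Otimes>\<^sub>M PiM J (\<lambda>_. D))"
    using measurable_compose[OF measurable_merge Fm] by simp
  have "(\<integral>\<^sup>+S. F S \<partial>PiM (I \<union> J) (\<lambda>_. D)) = (\<integral>\<^sup>+p. F (merge I J p) \<partial>(PiM I (\<lambda>_. D) \<Otimes>\<^sub>M PiM J (\<lambda>_. D)))"
    by (subst Pm, rule nn_integral_distr[OF measurable_merge]) (subst Pm[symmetric], rule Fm)
  also have "\<dots> = (\<integral>\<^sup>+x. \<integral>\<^sup>+y. F (merge I J (x, y)) \<partial>PiM J (\<lambda>_. D) \<partial>PiM I (\<lambda>_. D))"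
    by (rule PJ.nn_integral_fst[symmetric, OF Fm2])
  also have "\<dots> \<le> (\<integral>\<^sup>+x. ennreal (exp (r * (\<Sum>k\<in>I. (R \<theta>0 - lossf \<theta>0 (x k))))) * e ^ card J \<partial>PiM I (\<lambda>_. D))"
  proof (rule nn_integral_mono)
    fix x assume x: "x \<in> space (PiM I (\<lambda>_. D))"
    define tx where "tx = th x is"
    define A where "A = exp (r * (\<Sum>k\<in>I. (R \<theta>0 - lossf \<theta>0 (x k))))"
    define h where "h z = ennreal (exp (r * (R tx - lossf tx z)))" for z
    have hm: "h \<in> borel_measurable D" unfolding h_def by measurable
    have eqF: "F (merge I J (x, y)) = ennreal A * (\<Prod>k\<in>J. h (y k))" for y
    proof -
      have thx: "th (merge I J (x, y)) is = tx"
        unfolding th_def tx_def by (rule sgd_local) (auto simp: merge_def I_def)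
      have mI: "merge I J (x, y) k = x k" if "k \<in> I" for k using that by (simp add: merge_def)
      have mJ: "merge I J (x, y) k = y k" if "k \<in> J" for k using that IJ(2) by (auto simp: merge_def)
      have "Yf m is (merge I J (x, y)) = (\<Sum>k\<in>I. (R \<theta>0 - lossf \<theta>0 (x k))) + (\<Sum>k\<in>J. (R tx - lossf tx (y k)))"
        unfolding Yf_def thx I_def[symmetric] J_def[symmetric] using mI mJ by simp
      then have "exp (r * Yf m is (merge I J (x, y))) = A * (\<Prod>k\<in>J. exp (r * (R tx - lossf tx (y k))))"
        unfolding A_def by (simp add: distrib_left exp_add sum_distrib_left exp_sum IJ(4))
      then show ?thesis unfolding F_def h_def
        by (simp add: prod_ennreal ennreal_mult prod_nonneg A_def)
    qed
    have "(\<integral>\<^sup>+y. F (merge I J (x, y)) \<partial>PiM J (\<lambda>_. D)) = (\<integral>\<^sup>+y. ennreal A * (\<Prod>k\<in>J. h (y k)) \<partial>PiM J (\<lambda>_. D))"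
      unfolding eqF ..
    also have "\<dots> = ennreal A * (\<integral>\<^sup>+y. (\<Prod>k\<in>J. h (y k)) \<partial>PiM J (\<lambda>_. D))"
    proof (intro nn_integral_cmult)
      have [measurable]: "k \<in> J \<Longrightarrow> (\<lambda>y. h (y k)) \<in> borel_measurable (PiM J (\<lambda>_. D))" for k
        using measurable_compose[OF measurable_component_singleton[of k J "\<lambda>_. D"] hm] by simp
      show "(\<lambda>y. \<Prod>k\<in>J. h (y k)) \<in> borel_measurable (PiM J (\<lambda>_. D))" by measurable
    qed
    also have "(\<integral>\<^sup>+y. (\<Prod>k\<in>J. h (y k)) \<partial>PiM J (\<lambda>_. D)) = (\<Prod>k\<in>J. integral\<^sup>N D h)"
      by (rule PS.product_nn_integral_prod[OF IJ(4)]) (rule hm)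
    also have "\<dots> = (integral\<^sup>N D h) ^ card J" by simp
    also have "\<dots> \<le> e ^ card J" unfolding h_def e_def by (intro ennreal_pow_mono hoeff r)
    finally show "(\<integral>\<^sup>+y. F (merge I J (x, y)) \<partial>PiM J (\<lambda>_. D)) \<le> ennreal A * e ^ card J"
      by (simp add: mult_left_mono)
  qed
  also have "\<dots> = (\<integral>\<^sup>+x. ennreal (exp (r * (\<Sum>k\<in>I. (R \<theta>0 - lossf \<theta>0 (x k))))) \<partial>PiM I (\<lambda>_. D)) * e ^ card J"
  proof (rule nn_integral_multc)
    have [measurable]: "k \<in> I \<Longrightarrow> (\<lambda>x. lossf \<theta>0 (x k)) \<in> borel_measurable (PiM I (\<lambda>_. D))" for k
      using measurable_compose[OF measurable_component_singleton[of k I "\<lambda>_. D"] lossf_meas] by simp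
    show "(\<lambda>x. ennreal (exp (r * (\<Sum>k\<in>I. (R \<theta>0 - lossf \<theta>0 (x k)))))) \<in> borel_measurable (PiM I (\<lambda>_. D))"
      by measurable
  qed
  also have "(\<integral>\<^sup>+x. ennreal (exp (r * (\<Sum>k\<in>I. (R \<theta>0 - lossf \<theta>0 (x k))))) \<partial>PiM I (\<lambda>_. D))
      = (\<integral>\<^sup>+x. (\<Prod>k\<in>I. ennreal (exp (r * (R \<theta>0 - lossf \<theta>0 (x k))))) \<partial>PiM I (\<lambda>_. D))"
    by (simp add: sum_distrib_left exp_sum IJ(3) prod_ennreal)
  also have "\<dots> = (\<Prod>k\<in>I. (\<integral>\<^sup>+z. ennreal (exp (r * (R \<theta>0 - lossf \<theta>0 z))) \<partial>D))"
    by (rule PS.product_nn_integral_prod[OF IJ(3)]) measurable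
  also have "\<dots> = (\<integral>\<^sup>+z. ennreal (exp (r * (R \<theta>0 - lossf \<theta>0 z))) \<partial>D) ^ card I" by simp
  also have "\<dots> \<le> e ^ card I" unfolding e_def by (intro ennreal_pow_mono hoeff r)
  finally have "(\<integral>\<^sup>+S. F S \<partial>PiM (I \<union> J) (\<lambda>_. D)) \<le> e ^ card I * e ^ card J"
    by (simp add: mult_right_mono)
  also have "\<dots> = e ^ m" using cardIJ by (metis power_add)
  finally show ?thesis unfolding F_def IJ(1) e_def .
qed

end


context gsD begin

lemma space_P_D: "S \<in> space (PiM {..<m} (\<lambda>_. D)) \<Longrightarrow> k < m \<Longrightarrow> fst (S k) < N"
proof -
  assume "S \<in> space (PiM {..<m} (\<lambda>_. D))" "k < m"
  then have "S k \<in> {..<N} \<times> UNIV" using space_D by (auto simp: space_PiM PiE_iff)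
  then show "fst (S k) < N" by auto
qed

lemma space_P_D': "S \<in> space (PiM {..<m} (\<lambda>_. D)) \<Longrightarrow> k < m \<Longrightarrow> S k \<in> space D"
  by (auto simp: space_PiM PiE_iff)

lemma decomp:
  assumes S: "S \<in> space (PiM {..<m} (\<lambda>_. D))" and Iss: "set is \<subseteq> {..<m}" and len: "length is = T"
    and m: "m \<ge> 1"
  shows "R (th S is) - emp_risk N l \<sigma> g feat m S (th S is) \<le> (Yf m is S + 2*\<eta>*T\<^sup>2*K\<^sup>2) / m"
proof -
  define t where "t = th S is"
  define I where "I = set is"
  have fI: "finite I" unfolding I_def by simp
  have cI: "card I \<le> T" unfolding I_def using len card_length by metis
  have dr: "\<bar>t - \<theta>0\<bar> \<le> \<eta> * T * K"
    unfolding t_def th_def using drift[of "is" S, OF _ eta] space_P_D[OF S] Iss len by auto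
  have emp: "emp_risk N l \<sigma> g feat m S t = (\<Sum>k<m. lossf t (S k)) / m"
    unfolding emp_risk_def lossf_def ..
  have e1: "R t - emp_risk N l \<sigma> g feat m S t = (\<Sum>k<m. (R t - lossf t (S k))) / m"
    unfolding emp using m by (simp add: sum_subtractf field_simps)
  have e2: "(\<Sum>k<m. (R t - lossf t (S k))) = (\<Sum>k\<in>{..<m} - I. (R t - lossf t (S k))) + (\<Sum>k\<in>I. (R t - lossf t (S k)))"
    using Iss unfolding I_def by (intro sum.subset_diff) auto
  have e3: "(\<Sum>k\<in>I. (R t - lossf t (S k))) \<le> (\<Sum>k\<in>I. ((R \<theta>0 - lossf \<theta>0 (S k)) + 2*\<eta>*T*K\<^sup>2))"
  proof (rule sum_mono)
    fix k assume k: "k \<in> I"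
    then have km: "k < m" using Iss unfolding I_def by auto
    have a: "R t - R \<theta>0 \<le> K * \<bar>t - \<theta>0\<bar>" using R_lip[of t \<theta>0] by simp
    have b: "lossf \<theta>0 (S k) - lossf t (S k) \<le> K * \<bar>t - \<theta>0\<bar>"
      using lossf_lip[OF space_P_D'[OF S km], of \<theta>0 t] by (simp add: abs_minus_commute)
    have c: "K * \<bar>t - \<theta>0\<bar> \<le> K * (\<eta> * T * K)" using dr K_nn by (intro mult_left_mono) auto
    have "K * (\<eta> * T * K) = \<eta>*T*K\<^sup>2" by (simp add: power2_eq_square)
    then show "R t - lossf t (S k) \<le> (R \<theta>0 - lossf \<theta>0 (S k)) + 2*\<eta>*T*K\<^sup>2"
      using a b c by linarith
  qed
  have e4: "(\<Sum>k\<in>I. ((R \<theta>0 - lossf \<theta>0 (S k)) + 2*\<eta>*T*K\<^sup>2)) = (\<Sum>k\<in>I. (R \<theta>0 - lossf \<theta>0 (S k))) + card I * (2*\<eta>*T*K\<^sup>2)"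
    by (simp add: sum.distrib)
  have e5: "card I * (2*\<eta>*T*K\<^sup>2) \<le> T * (2*\<eta>*T*K\<^sup>2)"
    using cI eta by (intro mult_right_mono) auto
  have e6: "T * (2*\<eta>*T*K\<^sup>2) = 2*\<eta>*T\<^sup>2*K\<^sup>2" by (simp add: power2_eq_square)
  have YY: "Yf m is S = (\<Sum>k\<in>I. (R \<theta>0 - lossf \<theta>0 (S k))) + (\<Sum>k\<in>{..<m} - I. (R t - lossf t (S k)))"
    unfolding Yf_def I_def t_def ..
  have "(\<Sum>k<m. (R t - lossf t (S k))) \<le> Yf m is S + 2*\<eta>*T\<^sup>2*K\<^sup>2"
    using e2 e3 e4 e5 e6 YY by linarith
  then have "(\<Sum>k<m. (R t - lossf t (S k))) / m \<le> (Yf m is S + 2*\<eta>*T\<^sup>2*K\<^sup>2) / m"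
    by (rule divide_right_mono) simp
  then have "R t - emp_risk N l \<sigma> g feat m S t \<le> (Yf m is S + 2*\<eta>*T\<^sup>2*K\<^sup>2) / m" using e1 by simp
  then show ?thesis unfolding t_def .
qed

end


lemma chernoff_arith:
  fixes M \<delta> :: real and m :: nat
  assumes M: "M > 0" and m: "m \<ge> 1" and d: "0 < \<delta>" "\<delta> < 1"
  defines "\<epsilon> \<equiv> M * sqrt (ln (1 / \<delta>) / (2 * real m))"
  defines "s \<equiv> 4 * real m * \<epsilon> / M\<^sup>2"
  shows "exp (- s * \<epsilon>) * exp ((s / m)\<^sup>2 * M\<^sup>2 / 8) ^ m = \<delta>"
proof -
  define L where "L = ln (1 / \<delta>)"
  have L: "L > 0" unfolding L_def using d by simp
  have mp: "real m > 0" using m by simp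
  have e2: "\<epsilon>\<^sup>2 = M\<^sup>2 * L / (2 * real m)"
    unfolding \<epsilon>_def L_def[symmetric] using L mp by (simp add: power_mult_distrib)
  have "exp ((s / m)\<^sup>2 * M\<^sup>2 / 8) ^ m = exp (real m * ((s / m)\<^sup>2 * M\<^sup>2 / 8))"
    by (rule exp_of_nat_mult[symmetric])
  then have "exp (- s * \<epsilon>) * exp ((s / m)\<^sup>2 * M\<^sup>2 / 8) ^ m = exp (- s * \<epsilon>) * exp (real m * ((s / m)\<^sup>2 * M\<^sup>2 / 8))"
    by (simp only:)
  also have "\<dots> = exp (- s * \<epsilon> + real m * ((s / m)\<^sup>2 * M\<^sup>2 / 8))"
    by (rule exp_add[symmetric])
  also have "- s * \<epsilon> + real m * ((s / m)\<^sup>2 * M\<^sup>2 / 8) = - L"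
  proof -
    have "s * \<epsilon> = 4 * real m * \<epsilon>\<^sup>2 / M\<^sup>2" unfolding s_def by (simp add: power2_eq_square)
    also have "\<dots> = 2 * L" unfolding e2 using M mp by (simp add: field_simps)
    finally have 1: "s * \<epsilon> = 2 * L" .
    have "real m * ((s / m)\<^sup>2 * M\<^sup>2 / 8) = 2 * real m * \<epsilon>\<^sup>2 / M\<^sup>2"
      unfolding s_def using M mp by (simp add: field_simps power2_eq_square)
    also have "\<dots> = L" unfolding e2 using M mp by (simp add: field_simps)
    finally show ?thesis using 1 by simp
  qed
  also have "exp (- L) = \<delta>" unfolding L_def using d by (simp add: ln_div exp_minus)
  finally show ?thesis .
qed

context gsD begin

lemma ISs_fin: "finite {is. set is \<subseteq> {..<(m::nat)} \<and> length is = T}"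
  by (rule finite_lists_length_eq) simp

lemma ISs_card: "card {is. set is \<subseteq> {..<(m::nat)} \<and> length is = T} = m ^ T"
  using card_lists_length_eq[of "{..<m}" T] by simp

lemma ISs_ne: "(m::nat) \<ge> 1 \<Longrightarrow> {is. set is \<subseteq> {..<m} \<and> length is = T} \<noteq> {}"
proof -
  assume "m \<ge> 1"
  then have "replicate T 0 \<in> {is. set is \<subseteq> {..<m} \<and> length is = T}" by auto
  then show ?thesis by blast
qed

lemma emp_meas:
  assumes "set is \<subseteq> {..<m}"
  shows "(\<lambda>S. emp_risk N l \<sigma> g feat m S (th S is)) \<in> borel_measurable (PiM {..<m} (\<lambda>_. D))"
proof -
  have [measurable]: "(\<lambda>S. th S is) \<in> borel_measurable (PiM {..<m} (\<lambda>_. D))" using assms by measurable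
  have e: "emp_risk N l \<sigma> g feat m S (th S is) = (\<Sum>k<m. lossf (th S is) (S k)) / m" for S
    unfolding emp_risk_def lossf_def ..
  show ?thesis unfolding e
    by (intro borel_measurable_divide borel_measurable_sum lossf_comp_meas) auto
qed

lemma final:
  assumes m: "1 \<le> m" and d: "0 < \<delta>" "\<delta> < 1"
  shows "measure (PiM {..<m} (\<lambda>_. D))
      {S \<in> space (PiM {..<m} (\<lambda>_. D)).
         sgd_expect m T (\<lambda>is.
            risk N l \<sigma> g feat D (sgd_param N l \<sigma> g feat \<eta> \<theta>0 S is)
            - emp_risk N l \<sigma> g feat m S (sgd_param N l \<sigma> g feat \<eta> \<theta>0 S is))
         \<le> (1 / real m) * ((2 * \<eta> * T\<^sup>2 * (\<alpha>l * \<alpha>\<sigma>)\<^sup>2) * Lc ^ (2 * T))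
           + (0 * Lc ^ (2 * T) + M) * sqrt (ln (1 / \<delta>) / (2 * real m))}
      \<ge> 1 - \<delta>"
proof -
  define P where "P = PiM {..<m} (\<lambda>_. D)"
  define ISs where "ISs = {is. set is \<subseteq> {..<m} \<and> length is = T}"
  define C1 where "C1 = 2 * \<eta> * T\<^sup>2 * (\<alpha>l * \<alpha>\<sigma>)\<^sup>2"
  define B0 where "B0 = (1 / real m) * (C1 * Lc ^ (2 * T))"
  define \<epsilon> where "\<epsilon> = M * sqrt (ln (1 / \<delta>) / (2 * real m))"
  define \<Phi> where "\<Phi> S = sgd_expect m T (\<lambda>is. risk N l \<sigma> g feat D (sgd_param N l \<sigma> g feat \<eta> \<theta>0 S is)
            - emp_risk N l \<sigma> g feat m S (sgd_param N l \<sigma> g feat \<eta> \<theta>0 S is))" for S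
  define W where "W S = sgd_expect m T (\<lambda>is. Yf m is S) / m" for S
  interpret Pp: prob_space P unfolding P_def by (rule prob_space_PiM) (simp add: D_prob)
  have fin: "finite ISs" unfolding ISs_def by (rule ISs_fin)
  have card: "card ISs = m ^ T" unfolding ISs_def by (rule ISs_card)
  have ne: "ISs \<noteq> {}" unfolding ISs_def using m by (rule ISs_ne)
  have mp: "real m > 0" using m by simp
  have mT: "real m ^ T > 0" using mp by simp
  have \<Phi>_eq: "\<Phi> S = (\<Sum>is\<in>ISs. R (th S is) - emp_risk N l \<sigma> g feat m S (th S is)) / real m ^ T" for S
    unfolding \<Phi>_def sgd_expect_def ISs_def R_def th_def ..
  have W_eq: "W S = (\<Sum>is\<in>ISs. Yf m is S) / real m ^ T / m" for S
    unfolding W_def sgd_expect_def ISs_def ..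
  have \<Phi>_meas: "\<Phi> \<in> borel_measurable P"
    unfolding \<Phi>_eq P_def
  proof (intro borel_measurable_divide borel_measurable_sum borel_measurable_diff)
    fix "is" assume "is \<in> ISs"
    then have I: "set is \<subseteq> {..<m}" unfolding ISs_def by simp
    show "(\<lambda>S. R (th S is)) \<in> borel_measurable (PiM {..<m} (\<lambda>_. D))"
      using measurable_compose[OF theta_meas[OF I] R_meas] .
    show "(\<lambda>S. emp_risk N l \<sigma> g feat m S (th S is)) \<in> borel_measurable (PiM {..<m} (\<lambda>_. D))"
      by (rule emp_meas[OF I])
  qed simp
  have W_meas: "W \<in> borel_measurable P"
    unfolding W_eq P_def
    by (intro borel_measurable_divide borel_measurable_sum Yf_meas) (auto simp: ISs_def)
  have c_le: "2*\<eta>*T\<^sup>2*K\<^sup>2 \<le> C1 * Lc ^ (2 * T)"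
  proof (cases "T = 0")
    case True then show ?thesis unfolding C1_def by simp
  next
    case False
    have "Lc ^ 2 \<le> Lc ^ (2 * T)" using Lc_ge1 False by (intro power_increasing) auto
    then have "C1 * Lc ^ 2 \<le> C1 * Lc ^ (2 * T)" unfolding C1_def using eta by (intro mult_left_mono) auto
    moreover have "2*\<eta>*T\<^sup>2*K\<^sup>2 = C1 * Lc ^ 2" unfolding C1_def K_def by (simp add: power_mult_distrib)
    ultimately show ?thesis by simp
  qed
  have PhiW: "\<Phi> S \<le> W S + B0" if S: "S \<in> space P" for S
  proof -
    define c where "c = 2*\<eta>*T\<^sup>2*K\<^sup>2"
    have "(\<Sum>is\<in>ISs. R (th S is) - emp_risk N l \<sigma> g feat m S (th S is)) \<le> (\<Sum>is\<in>ISs. (Yf m is S + c) / m)"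
      unfolding c_def
      by (rule sum_mono, rule decomp[OF S[unfolded P_def]]) (use m in \<open>auto simp: ISs_def\<close>)
    also have "\<dots> = (\<Sum>is\<in>ISs. Yf m is S) / m + real m ^ T * c / m"
      using card by (simp add: add_divide_distrib sum.distrib sum_divide_distrib[symmetric])
    finally have "\<Phi> S \<le> ((\<Sum>is\<in>ISs. Yf m is S) / m + real m ^ T * c / m) / real m ^ T"
      unfolding \<Phi>_eq using mT by (simp add: divide_right_mono)
    also have "\<dots> = W S + c / m" unfolding W_eq using mT mp by (simp add: field_simps)
    also have "c / m \<le> B0" unfolding B0_def c_def using c_le mp by (simp add: divide_right_mono)
    finally show ?thesis by simp
  qed
  have goal_set: "{S \<in> space P. \<Phi> S \<le> B0 + \<epsilon>} \<in> sets P" using \<Phi>_meas by measurable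
  have M0: "M \<ge> 0" using l_bnd by (meson order_trans)
  have main: "Pp.prob {S \<in> space P. \<Phi> S \<le> B0 + \<epsilon>} \<ge> 1 - \<delta>"
  proof (cases "M = 0")
    case True
    have "W S = 0" for S
    proof -
      have "R \<theta> = 0" for \<theta> using R_bnd[of \<theta>] True by simp
      moreover have "lossf \<theta> z = 0" for \<theta> z using lossf_bnd[of \<theta> z] True by simp
      ultimately show ?thesis unfolding W_eq Yf_def by simp
    qed
    then have "{S \<in> space P. \<Phi> S \<le> B0 + \<epsilon>} = space P" using PhiW True unfolding \<epsilon>_def by auto
    then show ?thesis using d by (simp add: Pp.prob_space)
  next
    case False
    then have Mp: "M > 0" using M0 by simp
    define s where "s = 4 * real m * \<epsilon> / M\<^sup>2"
    have ep: "\<epsilon> > 0" unfolding \<epsilon>_def using Mp mp d by simp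
    have sp: "s > 0" unfolding s_def using mp ep Mp by simp
    define Ereal where "Ereal = exp ((s / m)\<^sup>2 * M\<^sup>2 / 8) ^ m"
    have "emeasure P {x \<in> space P. W x \<ge> \<epsilon>} \<le>
        ennreal (exp (-s * \<epsilon>)) * (\<integral>\<^sup>+x. ennreal (exp (s * W x)) * indicator (space P) x \<partial>P)"
      by (rule Chernoff_ineq_nn_integral_ge[OF sp]) (use W_meas in measurable)
    also have "(\<integral>\<^sup>+x. ennreal (exp (s * W x)) * indicator (space P) x \<partial>P) = (\<integral>\<^sup>+x. ennreal (exp (s * W x)) \<partial>P)"
      by (rule nn_integral_cong) simp
    also have "(\<integral>\<^sup>+x. ennreal (exp (s * W x)) \<partial>P) \<le> ennreal Ereal"
    proof -
      define a where "a = 1 / real m ^ T"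
      have a0: "a \<ge> 0" unfolding a_def by simp
      have "(\<integral>\<^sup>+x. ennreal (exp (s * W x)) \<partial>P) \<le>
          (\<integral>\<^sup>+x. (\<Sum>is\<in>ISs. ennreal a * ennreal (exp ((s / m) * Yf m is x))) \<partial>P)"
      proof (rule nn_integral_mono)
        fix x
        have Wx: "W x = (\<Sum>is\<in>ISs. a *\<^sub>R (Yf m is x / m))"
          unfolding W_eq a_def by (simp add: sum_divide_distrib[symmetric] sum_distrib_left[symmetric] field_simps)
        have "exp (s * W x) \<le> (\<Sum>is\<in>ISs. a * exp (s * (Yf m is x / m)))"
          unfolding Wx
          by (rule convex_on_sum[OF fin ne convex_on_exp[of s]]) (use sp card mT in \<open>auto simp: a_def\<close>)
        also have "\<dots> = (\<Sum>is\<in>ISs. a * exp ((s / m) * Yf m is x))" by (simp add: field_simps)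
        finally have "ennreal (exp (s * W x)) \<le> ennreal (\<Sum>is\<in>ISs. a * exp ((s / m) * Yf m is x))"
          by (simp add: ennreal_leI)
        also have "\<dots> = (\<Sum>is\<in>ISs. ennreal (a * exp ((s / m) * Yf m is x)))"
          by (rule sum_ennreal[symmetric]) (use a0 in simp)
        also have "\<dots> = (\<Sum>is\<in>ISs. ennreal a * ennreal (exp ((s / m) * Yf m is x)))"
          by (rule sum.cong[OF refl]) (use a0 in \<open>simp add: ennreal_mult\<close>)
        finally show "ennreal (exp (s * W x)) \<le> (\<Sum>is\<in>ISs. ennreal a * ennreal (exp ((s / m) * Yf m is x)))" .
      qed
      also have "\<dots> = (\<Sum>is\<in>ISs. ennreal a * (\<integral>\<^sup>+x. ennreal (exp ((s / m) * Yf m is x)) \<partial>P))"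
      proof (subst nn_integral_sum)
        fix "is" assume "is \<in> ISs"
        then have I: "set is \<subseteq> {..<m}" unfolding ISs_def by simp
        have [measurable]: "Yf m is \<in> borel_measurable P" unfolding P_def by (rule Yf_meas[OF I])
        show "(\<lambda>x. ennreal a * ennreal (exp ((s / m) * Yf m is x))) \<in> borel_measurable P" by measurable
      next
        show "(\<Sum>is\<in>ISs. \<integral>\<^sup>+x. ennreal a * ennreal (exp ((s / m) * Yf m is x)) \<partial>P) =
          (\<Sum>is\<in>ISs. ennreal a * (\<integral>\<^sup>+x. ennreal (exp ((s / m) * Yf m is x)) \<partial>P))"
        proof (rule sum.cong[OF refl], rule nn_integral_cmult)
          fix "is" assume "is \<in> ISs"
          then have I: "set is \<subseteq> {..<m}" unfolding ISs_def by simp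
          have [measurable]: "Yf m is \<in> borel_measurable P" unfolding P_def by (rule Yf_meas[OF I])
          show "(\<lambda>x. ennreal (exp ((s / m) * Yf m is x))) \<in> borel_measurable P" by measurable
        qed
      qed
      also have "\<dots> \<le> (\<Sum>is\<in>ISs. ennreal a * ennreal Ereal)"
      proof (rule sum_mono, rule mult_left_mono)
        fix "is" assume "is \<in> ISs"
        then have I: "set is \<subseteq> {..<m}" unfolding ISs_def by simp
        have "s / m > 0" using sp mp by simp
        from core[OF I this] show "(\<integral>\<^sup>+x. ennreal (exp ((s / m) * Yf m is x)) \<partial>P) \<le> ennreal Ereal"
          unfolding P_def Ereal_def by (simp add: ennreal_power)
      qed simp
      also have "\<dots> = (\<Sum>is\<in>ISs. ennreal (a * Ereal))"
        by (rule sum.cong[OF refl]) (use a0 in \<open>simp add: ennreal_mult Ereal_def\<close>)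
      also have "\<dots> = ennreal (\<Sum>is\<in>ISs. a * Ereal)"
        by (rule sum_ennreal) (use a0 in \<open>simp add: Ereal_def\<close>)
      also have "(\<Sum>is\<in>ISs. a * Ereal) = Ereal" using card mT by (simp add: a_def)
      finally show ?thesis .
    qed
    finally have "emeasure P {x \<in> space P. W x \<ge> \<epsilon>} \<le> ennreal (exp (-s * \<epsilon>)) * ennreal Ereal"
      by (simp add: mult_left_mono)
    also have "\<dots> = ennreal \<delta>"
      unfolding Ereal_def s_def \<epsilon>_def using chernoff_arith[OF Mp m d]
      by (simp add: ennreal_mult[symmetric] \<epsilon>_def)
    finally have "Pp.prob {x \<in> space P. W x \<ge> \<epsilon>} \<le> \<delta>"
      using d by (simp add: Pp.emeasure_eq_measure)
    moreover have "Pp.prob {x \<in> space P. \<not> \<Phi> x \<le> B0 + \<epsilon>} \<le> Pp.prob {x \<in> space P. W x \<ge> \<epsilon>}"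
      by (rule Pp.finite_measure_mono) (use PhiW W_meas in \<open>force, measurable\<close>)
    moreover have "Pp.prob {S \<in> space P. \<Phi> S \<le> B0 + \<epsilon>} = 1 - Pp.prob {x \<in> space P. \<not> \<Phi> x \<le> B0 + \<epsilon>}"
    proof -
      have "{S \<in> space P. \<Phi> S \<le> B0 + \<epsilon>} = space P - {x \<in> space P. \<not> \<Phi> x \<le> B0 + \<epsilon>}" by auto
      moreover have "{x \<in> space P. \<not> \<Phi> x \<le> B0 + \<epsilon>} \<in> Pp.events" using \<Phi>_meas by measurable
      ultimately show ?thesis using Pp.prob_compl by simp
    qed
    ultimately show ?thesis by linarith
  qed
  then show ?thesis unfolding P_def \<Phi>_def B0_def \<epsilon>_def C1_def by simp
qed

end

theorem theorem1:
  fixes \<eta> \<alpha>l \<alpha>\<sigma> \<nu>l \<nu>\<sigma> :: real and T :: nat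
  assumes "\<eta> > 0"
  shows "\<exists>C1 C2 :: real. \<forall>(N :: nat) (g :: filter) (feat :: nat \<Rightarrow> real)
      (\<sigma> :: real \<Rightarrow> real) (l :: real \<Rightarrow> real \<Rightarrow> real) (M :: real)
      (D :: (nat \<times> real) measure) (m :: nat) (\<theta>0 :: real) (\<delta> :: real).
    (\<forall>x<N. (\<Sum>j\<in>ego_nodes N g x. (feat j)\<^sup>2) = 1) \<longrightarrow>
    (\<forall>u. \<sigma> differentiable (at u)) \<longrightarrow>
    (\<forall>u. \<bar>deriv \<sigma> u\<bar> \<le> \<alpha>\<sigma>) \<longrightarrow>
    (\<forall>u v. \<bar>deriv \<sigma> u - deriv \<sigma> v\<bar> \<le> \<nu>\<sigma> * \<bar>u - v\<bar>) \<longrightarrow>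
    (\<forall>f y. (\<lambda>f'. l f' y) differentiable (at f)) \<longrightarrow>
    (\<forall>f f' y. \<bar>l f y - l f' y\<bar> \<le> \<alpha>l * \<bar>f - f'\<bar>) \<longrightarrow>
    (\<forall>x<N. \<forall>y \<theta> \<theta>'.
       \<bar>deriv (\<lambda>t. l (gcnn N \<sigma> g feat x t) y) \<theta> - deriv (\<lambda>t. l (gcnn N \<sigma> g feat x t) y) \<theta>'\<bar>
         \<le> \<nu>l * \<bar>deriv (\<lambda>t. gcnn N \<sigma> g feat x t) \<theta> - deriv (\<lambda>t. gcnn N \<sigma> g feat x t) \<theta>'\<bar>) \<longrightarrow>
    (\<forall>f y. 0 \<le> l f y \<and> l f y \<le> M) \<longrightarrow>
    (\<lambda>p. l (fst p) (snd p)) \<in> borel_measurable borel \<longrightarrow>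
    prob_space D \<longrightarrow>
    sets D = sets (count_space {..<N} \<Otimes>\<^sub>M (borel :: real measure)) \<longrightarrow>
    1 \<le> m \<longrightarrow> m \<le> N \<longrightarrow>
    0 < \<delta> \<longrightarrow> \<delta> < 1 \<longrightarrow>
    measure (PiM {..<m} (\<lambda>_. D))
      {S \<in> space (PiM {..<m} (\<lambda>_. D)).
         sgd_expect m T (\<lambda>is.
            risk N l \<sigma> g feat D (sgd_param N l \<sigma> g feat \<eta> \<theta>0 S is)
            - emp_risk N l \<sigma> g feat m S (sgd_param N l \<sigma> g feat \<eta> \<theta>0 S is))
         \<le> (1 / real m) * (C1 * (max 1 (largest_singular_value N g)) ^ (2 * T))
           + (C2 * (max 1 (largest_singular_value N g)) ^ (2 * T) + M)
             * sqrt (ln (1 / \<delta>) / (2 * real m))}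
      \<ge> 1 - \<delta>"
proof (rule exI[of _ "2 * \<eta> * T\<^sup>2 * (\<alpha>l * \<alpha>\<sigma>)\<^sup>2"], rule exI[of _ 0], intro allI impI)
  fix N :: nat and g :: filter and feat :: "nat \<Rightarrow> real" and \<sigma> :: "real \<Rightarrow> real"
    and l :: "real \<Rightarrow> real \<Rightarrow> real" and M :: real and D :: "(nat \<times> real) measure"
    and m :: nat and \<theta>0 \<delta> :: real
  assume h1: "\<forall>x<N. (\<Sum>j\<in>ego_nodes N g x. (feat j)\<^sup>2) = 1"
    and h2: "\<forall>u. \<sigma> differentiable (at u)"
    and h3: "\<forall>u. \<bar>deriv \<sigma> u\<bar> \<le> \<alpha>\<sigma>"
    and h4: "\<forall>u v. \<bar>deriv \<sigma> u - deriv \<sigma> v\<bar> \<le> \<nu>\<sigma> * \<bar>u - v\<bar>"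
    and h5: "\<forall>f y. (\<lambda>f'. l f' y) differentiable (at f)"
    and h6: "\<forall>f f' y. \<bar>l f y - l f' y\<bar> \<le> \<alpha>l * \<bar>f - f'\<bar>"
    and h7: "\<forall>x<N. \<forall>y \<theta> \<theta>'.
       \<bar>deriv (\<lambda>t. l (gcnn N \<sigma> g feat x t) y) \<theta> - deriv (\<lambda>t. l (gcnn N \<sigma> g feat x t) y) \<theta>'\<bar>
         \<le> \<nu>l * \<bar>deriv (\<lambda>t. gcnn N \<sigma> g feat x t) \<theta> - deriv (\<lambda>t. gcnn N \<sigma> g feat x t) \<theta>'\<bar>"
    and h8: "\<forall>f y. 0 \<le> l f y \<and> l f y \<le> M"
    and h9: "(\<lambda>p. l (fst p) (snd p)) \<in> borel_measurable borel"
    and h10: "prob_space D"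
    and h11: "sets D = sets (count_space {..<N} \<Otimes>\<^sub>M (borel :: real measure))"
    and h12: "1 \<le> m" and h13: "m \<le> N" and h14: "0 < \<delta>" and h15: "\<delta> < 1"
  have N1: "1 \<le> N" using h12 h13 by linarith
  interpret gsD N g feat \<sigma> l M \<alpha>l \<alpha>\<sigma> D \<eta> \<theta>0
    by (intro gsD.intro gs.intro gsD_axioms.intro h1 h2 h3 h5 h6 h8 h9 N1 h10 h11 assms)
  show "measure (PiM {..<m} (\<lambda>_. D))
      {S \<in> space (PiM {..<m} (\<lambda>_. D)).
         sgd_expect m T (\<lambda>is.
            risk N l \<sigma> g feat D (sgd_param N l \<sigma> g feat \<eta> \<theta>0 S is)
            - emp_risk N l \<sigma> g feat m S (sgd_param N l \<sigma> g feat \<eta> \<theta>0 S is))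
         \<le> (1 / real m) * (2 * \<eta> * T\<^sup>2 * (\<alpha>l * \<alpha>\<sigma>)\<^sup>2 * (max 1 (largest_singular_value N g)) ^ (2 * T))
           + (0 * (max 1 (largest_singular_value N g)) ^ (2 * T) + M)
             * sqrt (ln (1 / \<delta>) / (2 * real m))}
      \<ge> 1 - \<delta>"
    using final[OF h12 h14 h15] unfolding Lc_def .
qed

end
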